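(* Under (B.1), (B.2), (B.3), the minimax solution $\varphi$ of the problem $\partial_t\varphi+H(t,x(\cdot),\nabla\varphi)=0$ on $[0,T)\times C([-h,T],\mathbb{R}^n)$, $\varphi(T,x(\cdot))=\sigma(x(\cdot))$, is a viscosity solution, i.e. it satisfies: (V$^*$) for every $ci$-smooth $\psi:[0,T]\times C([-h,T],\mathbb{R}^n)\to\mathbb{R}$, if $\varphi-\psi$ attains a local minimum (with respect to the metric $\mathrm{dist}$) at a point $(t,x(\cdot))\in[0,T)\times C([-h,T],\mathbb{R}^n)$, then $\partial_t\psi(t,x(\cdot))+H(t,x(\cdot),\nabla\psi(t,x(\cdot)))\le0$; (V$_*$) for every $ci$-smooth $\psi$, if $\varphi-\psi$ attains a local maximum at a point $(t,x(\cdot))\in[0,T)\times C([-h,T],\mathbb{R}^n)$, then $\partial_t\psi(t,x(\cdot))+H(t,x(\cdot),\nabla\psi(t,x(\cdot)))\ge0$.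
   Context: Fix $n\in\mathbb{N}$, $h>0$, $T>0$; $\langle\cdot,\cdot\rangle$, $\|\cdot\|$ Euclidean. $C([-h,T],\mathbb{R}^n)$ has the sup norm $\|\cdot\|_{[-h,T]}$; $[0,T]\times C([-h,T],\mathbb{R}^n)$ has the metric $\mathrm{dist}((t,x(\cdot)),(\tau,y(\cdot)))=|t-\tau|+\|x(\cdot)-y(\cdot)\|_{[-h,T]}$. Non-anticipative: $\varphi(t,x(\cdot))=\varphi(t,y(\cdot))$ whenever $t\in[0,T)$ and $x=y$ on $[-h,t]$. $\mathrm{Lip}(t,x(\cdot))$: the $y(\cdot)\in C([-h,T],\mathbb{R}^n)$ with $y=x$ on $[-h,t]$, Lipschitz on $[t,T]$. $ci$-differentiable at $(t,x(\cdot))$, $t<T$: there exist $\partial_t\varphi(t,x(\cdot))\in\mathbb{R}$, $\nabla\varphi(t,x(\cdot))\in\mathbb{R}^n$ with $\varphi(\tau,y(\cdot))-\varphi(t,x(\cdot))=\partial_t\varphi(t,x(\cdot))(\tau-t)+\langle\nabla\varphi(t,x(\cdot)),y(\tau)-x(t)\rangle+o(\tau-t)$, $\tau\in(t,T]$, for every $y(\cdot)\in\mathrm{Lip}(t,x(\cdot))$, $o(\delta)/\delta\to0$ as $\delta\downarrow0$ ($o$ may depend on $y$). $ci$-smooth: continuous, $ci$-differentiable at every point of $[0,T)\times C([-h,T],\mathbb{R}^n)$, with $\partial_t\varphi$ and $\nabla\varphi$ continuous there. (B.1) $H,\sigma$ continuous; (B.2) there is $c>0$ with $|H(t,x(\cdot),s)-H(t,x(\cdot),r)|\le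 c(1+\max_{\tau\in[-h,t]}\|x(\tau)\|)\|s-r\|$ for all $t,x(\cdot),s,r$; (B.3) for every compact $D\subset C([-h,T],\mathbb{R}^n)$ there is $\lambda>0$ with $|H(t,x(\cdot),s)-H(t,y(\cdot),s)|\le\lambda(1+\|s\|)\max_{\tau\in[-h,t]}\|x(\tau)-y(\tau)\|$ for all $t\in[0,T]$, $x(\cdot),y(\cdot)\in D$, $s$. $Y(t,x(\cdot))$: the $y(\cdot)\in\mathrm{Lip}(t,x(\cdot))$ with $\|\dot y(\tau)\|\le c(1+\max_{\xi\in[-h,\tau]}\|y(\xi)\|)$ for a.e. $\tau\in[t,T]$. A minimax solution: $\varphi$ non-anticipative, continuous, $\varphi(T,\cdot)=\sigma$, and for every $(t,x(\cdot))\in[0,T)\times C([-h,T],\mathbb{R}^n)$, $s\in\mathbb{R}^n$ there is $y(\cdot)\in Y(t,x(\cdot))$ with $\varphi(\tau,y(\cdot))-\varphi(t,x(\cdot))=\langle s,y(\tau)-x(t)\rangle-\int_t^\tau H(\xi,y(\cdot),s)\,d\xi$ for all $\tau\in[t,T]$. *)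

theory Defs
  imports "HOL-Analysis.Analysis"
begin

text \<open>Elements of C([-h,T],R^n) are represented canonically by functions
  real => 'a that are continuous on [-h,T] and equal to 0 outside [-h,T].\<close>
definition Cspace :: "real \<Rightarrow> real \<Rightarrow> (real \<Rightarrow> 'a::euclidean_space) set" where
  "Cspace h T = {x. continuous_on {-h..T} x \<and> (\<forall>s. s \<notin> {-h..T} \<longrightarrow> x s = 0)}"

definition supn :: "real \<Rightarrow> real \<Rightarrow> (real \<Rightarrow> 'a::euclidean_space) \<Rightarrow> real" where
  "supn a b x = Sup ((\<lambda>s. norm (x s)) ` {a..b})"

definition cdist :: "real \<Rightarrow> real \<Rightarrow> real \<Rightarrow> (real \<Rightarrow> 'a::euclidean_space) \<Rightarrow> real \<Rightarrow> (real \<Rightarrow> 'a) \<Rightarrow> real" where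
  "cdist h T t x \<tau> y = \<bar>t - \<tau>\<bar> + supn (-h) T (\<lambda>s. x s - y s)"

definition Lip_set :: "real \<Rightarrow> real \<Rightarrow> real \<Rightarrow> (real \<Rightarrow> 'a::euclidean_space) \<Rightarrow> (real \<Rightarrow> 'a) set" where
  "Lip_set h T t x = {y \<in> Cspace h T. (\<forall>s\<in>{-h..t}. y s = x s) \<and> (\<exists>L. L-lipschitz_on {t..T} y)}"

definition Y_set :: "real \<Rightarrow> real \<Rightarrow> real \<Rightarrow> real \<Rightarrow> (real \<Rightarrow> 'a::euclidean_space) \<Rightarrow> (real \<Rightarrow> 'a) set" where
  "Y_set h T c t x = {y \<in> Lip_set h T t x.
     AE \<tau> in lborel. \<tau> \<in> {t..T} \<longrightarrow>
       (\<exists>v. (y has_vector_derivative v) (at \<tau> within {t..T}) \<and> norm v \<le> c * (1 + supn (-h) \<tau> y))}"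

definition nonanticipative :: "real \<Rightarrow> real \<Rightarrow> (real \<Rightarrow> (real \<Rightarrow> 'a::euclidean_space) \<Rightarrow> real) \<Rightarrow> bool" where
  "nonanticipative h T \<phi> \<longleftrightarrow> (\<forall>t\<in>{0..<T}. \<forall>x\<in>Cspace h T. \<forall>y\<in>Cspace h T.
     (\<forall>s\<in>{-h..t}. x s = y s) \<longrightarrow> \<phi> t x = \<phi> t y)"

definition cont_C :: "real \<Rightarrow> real \<Rightarrow> real set \<Rightarrow> (real \<Rightarrow> (real \<Rightarrow> 'a::euclidean_space) \<Rightarrow> 'b::metric_space) \<Rightarrow> bool" where
  "cont_C h T S f \<longleftrightarrow> (\<forall>t\<in>S. \<forall>x\<in>Cspace h T. \<forall>\<epsilon>>0. \<exists>\<delta>>0. \<forall>\<tau>\<in>S. \<forall>y\<in>Cspace h T.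
     cdist h T t x \<tau> y < \<delta> \<longrightarrow> dist (f \<tau> y) (f t x) < \<epsilon>)"

definition has_ci_deriv :: "real \<Rightarrow> real \<Rightarrow> (real \<Rightarrow> (real \<Rightarrow> 'a::euclidean_space) \<Rightarrow> real) \<Rightarrow> real \<Rightarrow> 'a \<Rightarrow> real \<Rightarrow> (real \<Rightarrow> 'a) \<Rightarrow> bool" where
  "has_ci_deriv h T \<phi> a b t x \<longleftrightarrow> (\<forall>y\<in>Lip_set h T t x.
     ((\<lambda>\<tau>. (\<phi> \<tau> y - \<phi> t x - a * (\<tau> - t) - b \<bullet> (y \<tau> - x t)) / (\<tau> - t)) \<longlongrightarrow> 0) (at t within {t<..T}))"

definition ci_smooth :: "real \<Rightarrow> real \<Rightarrow> (real \<Rightarrow> (real \<Rightarrow> 'a::euclidean_space) \<Rightarrow> real) \<Rightarrow>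
    (real \<Rightarrow> (real \<Rightarrow> 'a) \<Rightarrow> real) \<Rightarrow> (real \<Rightarrow> (real \<Rightarrow> 'a) \<Rightarrow> 'a) \<Rightarrow> bool" where
  "ci_smooth h T \<psi> Dt Dx \<longleftrightarrow> cont_C h T {0..T} \<psi> \<and>
     (\<forall>t\<in>{0..<T}. \<forall>x\<in>Cspace h T. has_ci_deriv h T \<psi> (Dt t x) (Dx t x) t x) \<and>
     cont_C h T {0..<T} Dt \<and> cont_C h T {0..<T} Dx"

definition compact_C :: "real \<Rightarrow> real \<Rightarrow> (real \<Rightarrow> 'a::euclidean_space) set \<Rightarrow> bool" where
  "compact_C h T D \<longleftrightarrow> D \<subseteq> Cspace h T \<and> (\<forall>f::nat \<Rightarrow> real \<Rightarrow> 'a. (\<forall>k. f k \<in> D) \<longrightarrow>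
     (\<exists>(r::nat\<Rightarrow>nat) z. strict_mono r \<and> z \<in> D \<and> ((\<lambda>k. supn (-h) T (\<lambda>s. f (r k) s - z s)) \<longlonglongrightarrow> 0)))"

definition B1 :: "real \<Rightarrow> real \<Rightarrow> (real \<Rightarrow> (real \<Rightarrow> 'a::euclidean_space) \<Rightarrow> 'a \<Rightarrow> real) \<Rightarrow> ((real \<Rightarrow> 'a) \<Rightarrow> real) \<Rightarrow> bool" where
  "B1 h T H \<sigma> \<longleftrightarrow>
    (\<forall>t\<in>{0..T}. \<forall>x\<in>Cspace h T. \<forall>s. \<forall>\<epsilon>>0. \<exists>\<delta>>0. \<forall>\<tau>\<in>{0..T}. \<forall>y\<in>Cspace h T. \<forall>r.
       cdist h T t x \<tau> y + norm (s - r) < \<delta> \<longrightarrow> \<bar>H \<tau> y r - H t x s\<bar> < \<epsilon>) \<and>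
    (\<forall>x\<in>Cspace h T. \<forall>\<epsilon>>0. \<exists>\<delta>>0. \<forall>y\<in>Cspace h T.
       supn (-h) T (\<lambda>s. x s - y s) < \<delta> \<longrightarrow> \<bar>\<sigma> y - \<sigma> x\<bar> < \<epsilon>)"

definition B2 :: "real \<Rightarrow> real \<Rightarrow> real \<Rightarrow> (real \<Rightarrow> (real \<Rightarrow> 'a::euclidean_space) \<Rightarrow> 'a \<Rightarrow> real) \<Rightarrow> bool" where
  "B2 h T c H \<longleftrightarrow> c > 0 \<and> (\<forall>t\<in>{0..T}. \<forall>x\<in>Cspace h T. \<forall>s r.
     \<bar>H t x s - H t x r\<bar> \<le> c * (1 + supn (-h) t x) * norm (s - r))"

definition B3 :: "real \<Rightarrow> real \<Rightarrow> (real \<Rightarrow> (real \<Rightarrow> 'a::euclidean_space) \<Rightarrow> 'a \<Rightarrow> real) \<Rightarrow> bool" where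
  "B3 h T H \<longleftrightarrow> (\<forall>D. compact_C h T D \<longrightarrow> (\<exists>L>0. \<forall>t\<in>{0..T}. \<forall>x\<in>D. \<forall>y\<in>D. \<forall>s.
     \<bar>H t x s - H t y s\<bar> \<le> L * (1 + norm s) * supn (-h) t (\<lambda>\<xi>. x \<xi> - y \<xi>)))"

definition minimax_solution :: "real \<Rightarrow> real \<Rightarrow> real \<Rightarrow> (real \<Rightarrow> (real \<Rightarrow> 'a::euclidean_space) \<Rightarrow> 'a \<Rightarrow> real) \<Rightarrow>
    ((real \<Rightarrow> 'a) \<Rightarrow> real) \<Rightarrow> (real \<Rightarrow> (real \<Rightarrow> 'a) \<Rightarrow> real) \<Rightarrow> bool" where
  "minimax_solution h T c H \<sigma> \<phi> \<longleftrightarrow> nonanticipative h T \<phi> \<and> cont_C h T {0..T} \<phi> \<and>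
     (\<forall>x\<in>Cspace h T. \<phi> T x = \<sigma> x) \<and>
     (\<forall>t\<in>{0..<T}. \<forall>x\<in>Cspace h T. \<forall>s. \<exists>y\<in>Y_set h T c t x. \<forall>\<tau>\<in>{t..T}.
        \<phi> \<tau> y - \<phi> t x = s \<bullet> (y \<tau> - x t) - integral {t..\<tau>} (\<lambda>\<xi>. H \<xi> y s))"

definition loc_min_C :: "real \<Rightarrow> real \<Rightarrow> (real \<Rightarrow> (real \<Rightarrow> 'a::euclidean_space) \<Rightarrow> real) \<Rightarrow> real \<Rightarrow> (real \<Rightarrow> 'a) \<Rightarrow> bool" where
  "loc_min_C h T f t x \<longleftrightarrow> (\<exists>\<delta>>0. \<forall>\<tau>\<in>{0..T}. \<forall>y\<in>Cspace h T. cdist h T t x \<tau> y < \<delta> \<longrightarrow> f t x \<le> f \<tau> y)"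

definition loc_max_C :: "real \<Rightarrow> real \<Rightarrow> (real \<Rightarrow> (real \<Rightarrow> 'a::euclidean_space) \<Rightarrow> real) \<Rightarrow> real \<Rightarrow> (real \<Rightarrow> 'a) \<Rightarrow> bool" where
  "loc_max_C h T f t x \<longleftrightarrow> (\<exists>\<delta>>0. \<forall>\<tau>\<in>{0..T}. \<forall>y\<in>Cspace h T. cdist h T t x \<tau> y < \<delta> \<longrightarrow> f \<tau> y \<le> f t x)"

end

theory Submission
  imports Defs
begin


lemma supn_zero:
  assumes "a \<le> b" "\<forall>s\<in>{a..b}. f s = 0"
  shows "supn a b f = 0"
proof -
  have "(\<lambda>s. norm (f s)) ` {a..b} = {0}" using assms by force
  then show ?thesis unfolding supn_def by simp
qed

lemma supn_le:
  assumes "a \<le> b" "\<forall>s\<in>{a..b}. norm (f s) \<le> e"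
  shows "supn a b f \<le> e"
  unfolding supn_def using assms by (intro cSup_least) auto

lemma cdist_same: "-h \<le> T \<Longrightarrow> cdist h T t y \<tau> y = \<bar>t - \<tau>\<bar>"
  unfolding cdist_def by (subst supn_zero) auto

lemma stop_Lip:
  assumes "z \<in> Cspace h T" "\<tau> \<in> {-h..T}"
  shows "(\<lambda>s. if s \<in> {-h..T} then z (min s \<tau>) else 0) \<in> Lip_set h T \<tau> z"
proof -
  let ?w = "\<lambda>s. if s \<in> {-h..T} then z (min s \<tau>) else 0"
  have cz: "continuous_on {-h..T} z" using assms(1) unfolding Cspace_def by auto
  have "continuous_on {-h..T} (\<lambda>s. z (min s \<tau>))"
    by (rule continuous_on_compose2[OF cz]) (use assms(2) in \<open>auto intro!: continuous_intros\<close>)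
  then have "continuous_on {-h..T} ?w" by (rule continuous_on_eq) auto
  moreover have "0-lipschitz_on {\<tau>..T} ?w"
    unfolding lipschitz_on_def using assms(2) by auto
  ultimately show ?thesis unfolding Lip_set_def Cspace_def using assms(2) by auto
qed

lemma psi_eq_Lip:
  assumes d: "has_ci_deriv h T \<psi> a b \<tau> z" and w: "w \<in> Lip_set h T \<tau> z"
    and wc: "\<forall>s\<in>{\<tau>..T}. w s = z \<tau>" and tau: "\<tau> \<in> {0..<T}"
    and cont: "cont_C h T {0..T} \<psi>" and hT: "-h \<le> T"
  shows "\<psi> \<tau> w = \<psi> \<tau> z"
proof -
  let ?F = "at \<tau> within {\<tau><..T}"
  have Fnb: "?F \<noteq> bot" using tau by (simp add: trivial_limit_within)
  have wC: "w \<in> Cspace h T" using w unfolding Lip_set_def by auto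
  have ev: "eventually (\<lambda>\<tau>'. \<tau>' \<in> {\<tau><..T}) ?F"
    by (auto simp: eventually_at intro!: exI[of _ 1])
  have g: "((\<lambda>\<tau>'. (\<psi> \<tau>' w - \<psi> \<tau> z - a * (\<tau>' - \<tau>) - b \<bullet> (w \<tau>' - z \<tau>)) / (\<tau>' - \<tau>)) \<longlongrightarrow> 0) ?F"
    using d w unfolding has_ci_deriv_def by blast
  have lt: "((\<lambda>\<tau>'. \<tau>' - \<tau>) \<longlongrightarrow> 0) ?F"
    by (auto intro!: tendsto_eq_intros)
  have "((\<lambda>\<tau>'. (\<psi> \<tau>' w - \<psi> \<tau> z - a * (\<tau>' - \<tau>) - b \<bullet> (w \<tau>' - z \<tau>)) / (\<tau>' - \<tau>) * (\<tau>' - \<tau>) + a * (\<tau>' - \<tau>)) \<longlongrightarrow> 0 * 0 + a * 0) ?F"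
    by (intro tendsto_intros g lt)
  then have L: "((\<lambda>\<tau>'. (\<psi> \<tau>' w - \<psi> \<tau> z - a * (\<tau>' - \<tau>) - b \<bullet> (w \<tau>' - z \<tau>)) / (\<tau>' - \<tau>) * (\<tau>' - \<tau>) + a * (\<tau>' - \<tau>)) \<longlongrightarrow> 0) ?F"
    by simp
  have E: "eventually (\<lambda>\<tau>'. (\<psi> \<tau>' w - \<psi> \<tau> z - a * (\<tau>' - \<tau>) - b \<bullet> (w \<tau>' - z \<tau>)) / (\<tau>' - \<tau>) * (\<tau>' - \<tau>) + a * (\<tau>' - \<tau>) = \<psi> \<tau>' w - \<psi> \<tau> z) ?F"
  proof (rule eventually_mono[OF ev])
    fix \<tau>' assume "\<tau>' \<in> {\<tau><..T}"
    then have "w \<tau>' = z \<tau>" "\<tau>' - \<tau> \<noteq> 0" using wc by auto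
    then show "(\<psi> \<tau>' w - \<psi> \<tau> z - a * (\<tau>' - \<tau>) - b \<bullet> (w \<tau>' - z \<tau>)) / (\<tau>' - \<tau>) * (\<tau>' - \<tau>) + a * (\<tau>' - \<tau>) = \<psi> \<tau>' w - \<psi> \<tau> z"
      by simp
  qed
  have "((\<lambda>\<tau>'. \<psi> \<tau>' w - \<psi> \<tau> z) \<longlongrightarrow> 0) ?F"
    by (rule Lim_transform_eventually[OF L E])
  moreover have "((\<lambda>\<tau>'. \<psi> \<tau>' w - \<psi> \<tau> z) \<longlongrightarrow> \<psi> \<tau> w - \<psi> \<tau> z) ?F"
  proof (intro tendsto_intros)
    show "((\<lambda>\<tau>'. \<psi> \<tau>' w) \<longlongrightarrow> \<psi> \<tau> w) ?F"
    proof (rule tendstoI)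
      fix e :: real assume "e > 0"
      then obtain \<delta> where "\<delta> > 0" and H: "\<forall>\<tau>'\<in>{0..T}. \<forall>y\<in>Cspace h T.
         cdist h T \<tau> w \<tau>' y < \<delta> \<longrightarrow> dist (\<psi> \<tau>' y) (\<psi> \<tau> w) < e"
        using cont tau wC unfolding cont_C_def by fastforce
      show "eventually (\<lambda>\<tau>'. dist (\<psi> \<tau>' w) (\<psi> \<tau> w) < e) ?F"
        unfolding eventually_at
      proof (intro exI[of _ \<delta>] conjI ballI impI)
        fix \<tau>' assume "\<tau>' \<in> {\<tau><..T}" "\<tau>' \<noteq> \<tau> \<and> dist \<tau>' \<tau> < \<delta>"
        then show "dist (\<psi> \<tau>' w) (\<psi> \<tau> w) < e"
          using H wC tau cdist_same[OF hT, of \<tau> w \<tau>'] by (auto simp: dist_real_def)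
      qed fact
    qed
  qed
  ultimately have "\<psi> \<tau> w - \<psi> \<tau> z = 0" by (rule tendsto_unique[OF Fnb, symmetric])
  then show ?thesis by simp
qed

lemma psi_na:
  assumes s: "ci_smooth h T \<psi> Dt Dx" and tau: "\<tau> \<in> {0..<T}" and h: "h > 0"
    and y1: "y1 \<in> Cspace h T" and y2: "y2 \<in> Cspace h T"
    and eq: "\<forall>s\<in>{-h..\<tau>}. y1 s = y2 s"
  shows "\<psi> \<tau> y1 = \<psi> \<tau> y2"
proof -
  let ?w = "\<lambda>s. if s \<in> {-h..T} then y1 (min s \<tau>) else 0"
  have tI: "\<tau> \<in> {-h..T}" using tau h by auto
  have w1: "?w \<in> Lip_set h T \<tau> y1" by (rule stop_Lip[OF y1 tI])
  have w2: "?w \<in> Lip_set h T \<tau> y2"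
    using w1 eq y2 unfolding Lip_set_def by auto
  have c1: "\<forall>s\<in>{\<tau>..T}. ?w s = y1 \<tau>" using tI by auto
  have c2: "\<forall>s\<in>{\<tau>..T}. ?w s = y2 \<tau>" using tI eq by auto
  have cont: "cont_C h T {0..T} \<psi>" using s unfolding ci_smooth_def by auto
  have d1: "has_ci_deriv h T \<psi> (Dt \<tau> y1) (Dx \<tau> y1) \<tau> y1"
    using s tau y1 unfolding ci_smooth_def by auto
  have d2: "has_ci_deriv h T \<psi> (Dt \<tau> y2) (Dx \<tau> y2) \<tau> y2"
    using s tau y2 unfolding ci_smooth_def by auto
  have hT: "-h \<le> T" using tI by auto
  show ?thesis
    using psi_eq_Lip[OF d1 w1 c1 tau cont hT] psi_eq_Lip[OF d2 w2 c2 tau cont hT] by simp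
qed

lemma compact_C_pair:
  assumes "x \<in> Cspace h T" "y \<in> Cspace h T" "-h \<le> T"
  shows "compact_C h T {x, y}"
  unfolding compact_C_def
proof (intro conjI allI impI)
  show "{x, y} \<subseteq> Cspace h T" using assms by auto
next
  fix f :: "nat \<Rightarrow> real \<Rightarrow> 'a" assume f: "\<forall>k. f k \<in> {x, y}"
  have z0: "\<And>z::real\<Rightarrow>'a. supn (-h) T (\<lambda>s. z s - z s) = 0" using assms(3) by (intro supn_zero) auto
  have key: "\<exists>(r::nat\<Rightarrow>nat). strict_mono r \<and> z \<in> {x, y} \<and> ((\<lambda>k. supn (-h) T (\<lambda>s. f (r k) s - z s)) \<longlonglongrightarrow> 0)"
    if inf: "infinite {k. f k = z}" and zin: "z \<in> {x, y}" for z
  proof -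
    obtain r :: "nat \<Rightarrow> nat" where r: "strict_mono r" "\<forall>n. r n \<in> {k. f k = z}" using infinite_enumerate[OF inf] by blast
    have "(\<lambda>k. supn (-h) T (\<lambda>s. f (r k) s - z s)) = (\<lambda>k. 0)"
      using r(2) z0 by simp
    then show ?thesis using r(1) zin by (intro exI[of _ r]) simp
  qed
  show "\<exists>(r::nat\<Rightarrow>nat) z. strict_mono r \<and> z \<in> {x, y} \<and> ((\<lambda>k. supn (-h) T (\<lambda>s. f (r k) s - z s)) \<longlonglongrightarrow> 0)"
  proof (cases "infinite {k. f k = x}")
    case True
    then show ?thesis using key[of x] by blast
  next
    case False
    have "UNIV = {k. f k = x} \<union> {k. f k = y}" using f by auto
    then have "infinite {k. f k = y}" using False infinite_UNIV_nat by (metis finite_Un)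
    then show ?thesis using key[of y] by blast
  qed
qed



lemma aux_div: "(d::real) \<noteq> 0 \<Longrightarrow> -(I/d) - a - P/d = (-I - a*d - P)/d"
  by (simp add: field_simps)

lemma core:
  fixes h T c :: real
    and H :: "real \<Rightarrow> (real \<Rightarrow> 'a::euclidean_space) \<Rightarrow> 'a \<Rightarrow> real"
    and \<sigma> :: "(real \<Rightarrow> 'a) \<Rightarrow> real"
    and \<phi> :: "real \<Rightarrow> (real \<Rightarrow> 'a) \<Rightarrow> real"
  assumes h: "h > 0" and "T > 0"
    and B1: "B1 h T H \<sigma>" and B3: "B3 h T H"
    and mm: "minimax_solution h T c H \<sigma> \<phi>"
    and sm: "ci_smooth h T \<psi> Dt Dx" and t: "t \<in> {0..<T}" and x: "x \<in> Cspace h T"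
  shows "\<exists>y. ((\<lambda>\<tau>. ((\<phi> \<tau> y - \<psi> \<tau> y) - (\<phi> t x - \<psi> t x)) / (\<tau> - t))
               \<longlongrightarrow> -(Dt t x + H t x (Dx t x))) (at t within {t<..T}) \<and>
             (\<forall>\<delta>>0. eventually (\<lambda>\<tau>. \<tau> \<in> {0..T} \<and> \<tau> \<noteq> t \<and> (\<exists>z\<in>Cspace h T. cdist h T t x \<tau> z < \<delta> \<and>
                 \<phi> \<tau> z - \<psi> \<tau> z = \<phi> \<tau> y - \<psi> \<tau> y)) (at t within {t<..T}))"
proof -
  let ?F = "at t within {t<..T}"
  define a where "a = Dt t x"
  define b where "b = Dx t x"
  have hT: "-h \<le> T" using h t by auto
  have ev: "eventually (\<lambda>\<tau>. \<tau> \<in> {t<..T}) ?F"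
    by (auto simp: eventually_at intro!: exI[of _ 1])
  obtain y where yY: "y \<in> Y_set h T c t x" and
    yeq: "\<forall>\<tau>\<in>{t..T}. \<phi> \<tau> y - \<phi> t x = b \<bullet> (y \<tau> - x t) - integral {t..\<tau>} (\<lambda>\<xi>. H \<xi> y b)"
    using mm t x unfolding minimax_solution_def by blast
  have yL: "y \<in> Lip_set h T t x" using yY unfolding Y_set_def by auto
  have yC: "y \<in> Cspace h T" and yx: "\<forall>s\<in>{-h..t}. y s = x s" using yL unfolding Lip_set_def by auto
  have Hc: "continuous_on {t..T} (\<lambda>\<xi>. H \<xi> y b)"
    unfolding continuous_on_iff
  proof (intro ballI allI impI)
    fix \<xi>0 e assume \<xi>0: "\<xi>0 \<in> {t..T}" and e: "(0::real) < e"
    have "\<xi>0 \<in> {0..T}" using \<xi>0 t by auto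
    then obtain d where d: "d > 0" and D: "\<forall>\<tau>\<in>{0..T}. \<forall>z\<in>Cspace h T. \<forall>r.
       cdist h T \<xi>0 y \<tau> z + norm (b - r) < d \<longrightarrow> \<bar>H \<tau> z r - H \<xi>0 y b\<bar> < e"
      using B1 yC e unfolding B1_def by blast
    show "\<exists>d>0. \<forall>\<xi>'\<in>{t..T}. dist \<xi>' \<xi>0 < d \<longrightarrow> dist (H \<xi>' y b) (H \<xi>0 y b) < e"
    proof (intro exI[of _ d] conjI ballI impI)
      fix \<xi>' assume "\<xi>' \<in> {t..T}" "dist \<xi>' \<xi>0 < d"
      then show "dist (H \<xi>' y b) (H \<xi>0 y b) < e"
        using D[rule_format, of \<xi>' y b] yC t cdist_same[OF hT, of \<xi>0 y \<xi>'] by (auto simp: dist_real_def)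
    qed (rule d)
  qed
  have "((\<lambda>u. integral {t..u} (\<lambda>\<xi>. H \<xi> y b)) has_vector_derivative H t y b) (at t within {t..T})"
    by (rule integral_has_vector_derivative[OF Hc]) (use t in auto)
  then have "((\<lambda>u. (integral {t..u} (\<lambda>\<xi>. H \<xi> y b) - integral {t..t} (\<lambda>\<xi>. H \<xi> y b)) / (u - t)) \<longlongrightarrow> H t y b) (at t within {t..T})"
    unfolding has_real_derivative_iff_has_vector_derivative[symmetric] has_field_derivative_iff .
  then have "((\<lambda>u. integral {t..u} (\<lambda>\<xi>. H \<xi> y b) / (u - t)) \<longlongrightarrow> H t y b) (at t within {t..T})"
    by simp
  then have Ilim: "((\<lambda>u. integral {t..u} (\<lambda>\<xi>. H \<xi> y b) / (u - t)) \<longlongrightarrow> H t y b) ?F"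
    by (rule tendsto_within_subset) auto
  have Hxy: "H t y b = H t x b"
  proof -
    obtain L where "L > 0" and LL: "\<forall>t'\<in>{0..T}. \<forall>x1\<in>{x,y}. \<forall>y1\<in>{x,y}. \<forall>s.
       \<bar>H t' x1 s - H t' y1 s\<bar> \<le> L * (1 + norm s) * supn (-h) t' (\<lambda>\<xi>. x1 \<xi> - y1 \<xi>)"
      using B3 compact_C_pair[OF x yC hT] unfolding B3_def by blast
    have "supn (-h) t (\<lambda>\<xi>. x \<xi> - y \<xi>) = 0" using yx h t by (intro supn_zero) auto
    moreover have "\<bar>H t x b - H t y b\<bar> \<le> L * (1 + norm b) * supn (-h) t (\<lambda>\<xi>. x \<xi> - y \<xi>)"
      using LL t by simp
    ultimately have "\<bar>H t x b - H t y b\<bar> \<le> 0" by simp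
    then show ?thesis by simp
  qed
  have Rlim: "((\<lambda>\<tau>. (\<psi> \<tau> y - \<psi> t x - a * (\<tau> - t) - b \<bullet> (y \<tau> - x t)) / (\<tau> - t)) \<longlongrightarrow> 0) ?F"
    using sm t x yL unfolding ci_smooth_def has_ci_deriv_def a_def b_def by blast
  have lim1: "((\<lambda>\<tau>. - (integral {t..\<tau>} (\<lambda>\<xi>. H \<xi> y b) / (\<tau> - t)) - a
       - (\<psi> \<tau> y - \<psi> t x - a * (\<tau> - t) - b \<bullet> (y \<tau> - x t)) / (\<tau> - t)) \<longlongrightarrow> - H t y b - a - 0) ?F"
    by (intro tendsto_intros Ilim Rlim)
  have E: "eventually (\<lambda>\<tau>. - (integral {t..\<tau>} (\<lambda>\<xi>. H \<xi> y b) / (\<tau> - t)) - a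
       - (\<psi> \<tau> y - \<psi> t x - a * (\<tau> - t) - b \<bullet> (y \<tau> - x t)) / (\<tau> - t)
       = ((\<phi> \<tau> y - \<psi> \<tau> y) - (\<phi> t x - \<psi> t x)) / (\<tau> - t)) ?F"
  proof (rule eventually_mono[OF ev])
    fix \<tau> assume \<tau>: "\<tau> \<in> {t<..T}"
    then have ne: "\<tau> - t \<noteq> 0" by auto
    have "\<phi> \<tau> y - \<phi> t x = b \<bullet> (y \<tau> - x t) - integral {t..\<tau>} (\<lambda>\<xi>. H \<xi> y b)" using yeq \<tau> by auto
    then have "(\<phi> \<tau> y - \<psi> \<tau> y) - (\<phi> t x - \<psi> t x) = - integral {t..\<tau>} (\<lambda>\<xi>. H \<xi> y b) - a * (\<tau> - t)
       - (\<psi> \<tau> y - \<psi> t x - a * (\<tau> - t) - b \<bullet> (y \<tau> - x t))" by simp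
    then have num: "- integral {t..\<tau>} (\<lambda>\<xi>. H \<xi> y b) - a * (\<tau> - t)
       - (\<psi> \<tau> y - \<psi> t x - a * (\<tau> - t) - b \<bullet> (y \<tau> - x t)) = (\<phi> \<tau> y - \<psi> \<tau> y) - (\<phi> t x - \<psi> t x)" by simp
    show "- (integral {t..\<tau>} (\<lambda>\<xi>. H \<xi> y b) / (\<tau> - t)) - a
       - (\<psi> \<tau> y - \<psi> t x - a * (\<tau> - t) - b \<bullet> (y \<tau> - x t)) / (\<tau> - t)
       = ((\<phi> \<tau> y - \<psi> \<tau> y) - (\<phi> t x - \<psi> t x)) / (\<tau> - t)"
      unfolding aux_div[OF ne] by (rule arg_cong[where f="\<lambda>u. u / (\<tau> - t)"]) (use num in simp)
  qed
  have part1: "((\<lambda>\<tau>. ((\<phi> \<tau> y - \<psi> \<tau> y) - (\<phi> t x - \<psi> t x)) / (\<tau> - t))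
               \<longlongrightarrow> -(Dt t x + H t x (Dx t x))) ?F"
  proof -
    have e: "- H t y b - a - 0 = -(Dt t x + H t x (Dx t x))" using Hxy unfolding a_def b_def by simp
    show ?thesis using Lim_transform_eventually[OF lim1 E] unfolding e .
  qed
  have part2: "eventually (\<lambda>\<tau>. \<tau> \<in> {0..T} \<and> \<tau> \<noteq> t \<and> (\<exists>z\<in>Cspace h T. cdist h T t x \<tau> z < \<delta> \<and>
                 \<phi> \<tau> z - \<psi> \<tau> z = \<phi> \<tau> y - \<psi> \<tau> y)) ?F" if \<delta>: "\<delta> > 0" for \<delta>
  proof -
    have tI: "t \<in> {-h..T}" using t h by auto
    have cx: "continuous_on {-h..T} x" using x unfolding Cspace_def by auto
    have cy: "continuous_on {-h..T} y" using yC unfolding Cspace_def by auto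
    obtain d1 where d1: "d1 > 0" "\<forall>s\<in>{-h..T}. dist s t < d1 \<longrightarrow> dist (x s) (x t) < \<delta>/4"
      using cx tI \<delta> unfolding continuous_on_iff by (metis divide_pos_pos zero_less_numeral)
    obtain d2 where d2: "d2 > 0" "\<forall>s\<in>{-h..T}. dist s t < d2 \<longrightarrow> dist (y s) (y t) < \<delta>/4"
      using cy tI \<delta> unfolding continuous_on_iff by (metis divide_pos_pos zero_less_numeral)
    have ytx: "y t = x t" using yx tI t by auto
    define d where "d = min (min d1 d2) (min (T - t) (\<delta>/2))"
    have dpos: "d > 0" using d1 d2 t \<delta> unfolding d_def by auto
    have na: "nonanticipative h T \<phi>" using mm unfolding minimax_solution_def by auto
    have bnd: "norm (x s - y s) < \<delta>/2" if "s \<in> {-h..T}" "dist s t < d" for s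
    proof -
      have "norm (x s - y s) \<le> dist (x s) (x t) + dist (y s) (y t)"
        using ytx norm_triangle_ineq4[of "x s - x t" "y s - y t"] by (simp add: dist_norm algebra_simps)
      also have "\<dots> < \<delta>/4 + \<delta>/4" using d1 d2 that unfolding d_def by (intro add_strict_mono) auto
      finally show ?thesis by simp
    qed
    show ?thesis unfolding eventually_at
    proof (intro exI[of _ d] conjI[OF dpos] ballI impI)
      fix \<tau> assume \<tau>S: "\<tau> \<in> {t<..T}" and \<tau>d: "\<tau> \<noteq> t \<and> dist \<tau> t < d"
      have \<tau>T: "\<tau> < T" using \<tau>d \<tau>S unfolding d_def by (auto simp: dist_real_def)
      have \<tau>I: "\<tau> \<in> {-h..T}" using \<tau>S t h by auto
      define z where "z = (\<lambda>s. if s \<in> {-h..T} then (if s \<le> \<tau> then y s else x s + (y \<tau> - x \<tau>)) else 0)"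
      have "continuous_on {-h..T} (\<lambda>s. if s \<le> \<tau> then y s else x s + (y \<tau> - x \<tau>))"
      proof (rule continuous_on_cases_1)
        show "continuous_on {s \<in> {-h..T}. s \<le> \<tau>} y" by (rule continuous_on_subset[OF cy]) auto
        show "continuous_on {s \<in> {-h..T}. \<tau> \<le> s} (\<lambda>s. x s + (y \<tau> - x \<tau>))"
          by (intro continuous_intros continuous_on_subset[OF cx]) auto
      qed simp
      then have "continuous_on {-h..T} z" unfolding z_def by (rule continuous_on_eq) auto
      then have zC: "z \<in> Cspace h T" unfolding Cspace_def z_def by auto
      have zy: "\<forall>s\<in>{-h..\<tau>}. z s = y s" using \<tau>I unfolding z_def by auto
      have "supn (-h) T (\<lambda>s. x s - z s) \<le> \<delta>/2"
      proof (rule supn_le[OF hT], intro ballI)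
        fix s assume s: "s \<in> {-h..T}"
        consider "s \<le> t" | "t < s" "s \<le> \<tau>" | "\<tau> < s" by linarith
        then show "norm (x s - z s) \<le> \<delta>/2"
        proof cases
          case 1 then show ?thesis using s yx \<tau>S \<delta> unfolding z_def by auto
        next
          case 2
          then have "dist s t < d" using \<tau>d by (auto simp: dist_real_def)
          then show ?thesis using bnd[OF s] s 2 unfolding z_def by auto
        next
          case 3
          have "dist \<tau> t < d" using \<tau>d by auto
          then have "norm (x \<tau> - y \<tau>) < \<delta>/2" using bnd[OF \<tau>I] by auto
          then show ?thesis using s 3 unfolding z_def by (auto simp: norm_minus_commute)
        qed
      qed
      moreover have "\<bar>t - \<tau>\<bar> < \<delta>/2" using \<tau>d unfolding d_def by (auto simp: dist_real_def abs_minus_commute)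
      ultimately have cd: "cdist h T t x \<tau> z < \<delta>" unfolding cdist_def by linarith
      have \<tau>0: "\<tau> \<in> {0..<T}" using \<tau>S \<tau>T t by auto
      have "\<phi> \<tau> z = \<phi> \<tau> y" using na \<tau>0 zC yC zy unfolding nonanticipative_def by blast
      moreover have "\<psi> \<tau> z = \<psi> \<tau> y" by (rule psi_na[OF sm \<tau>0 h zC yC zy])
      ultimately show "\<tau> \<in> {0..T} \<and> \<tau> \<noteq> t \<and> (\<exists>z\<in>Cspace h T. cdist h T t x \<tau> z < \<delta> \<and>
                 \<phi> \<tau> z - \<psi> \<tau> z = \<phi> \<tau> y - \<psi> \<tau> y)"
        using cd zC \<tau>0 \<tau>S by auto
    qed
  qed
  show ?thesis using part1 part2 by blast
qed



theorem proposition10: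
  fixes h T c :: real
    and H :: "real \<Rightarrow> (real \<Rightarrow> 'a::euclidean_space) \<Rightarrow> 'a \<Rightarrow> real"
    and \<sigma> :: "(real \<Rightarrow> 'a) \<Rightarrow> real"
    and \<phi> :: "real \<Rightarrow> (real \<Rightarrow> 'a) \<Rightarrow> real"
  assumes "h > 0" and "T > 0"
    and "B1 h T H \<sigma>" and "B2 h T c H" and "B3 h T H"
    and "minimax_solution h T c H \<sigma> \<phi>"
  shows "(\<forall>\<psi> Dt Dx t x. ci_smooth h T \<psi> Dt Dx \<and> t \<in> {0..<T} \<and> x \<in> Cspace h T \<and>
            loc_min_C h T (\<lambda>\<tau> y. \<phi> \<tau> y - \<psi> \<tau> y) t x
            \<longrightarrow> Dt t x + H t x (Dx t x) \<le> 0) \<and>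
         (\<forall>\<psi> Dt Dx t x. ci_smooth h T \<psi> Dt Dx \<and> t \<in> {0..<T} \<and> x \<in> Cspace h T \<and>
            loc_max_C h T (\<lambda>\<tau> y. \<phi> \<tau> y - \<psi> \<tau> y) t x
            \<longrightarrow> Dt t x + H t x (Dx t x) \<ge> 0)"
proof (intro conjI allI impI; elim conjE)
  fix \<psi> Dt Dx t x
  assume sm: "ci_smooth h T \<psi> Dt Dx" and t: "t \<in> {0..<T}" and x: "x \<in> Cspace h T"
    and lm: "loc_min_C h T (\<lambda>\<tau> y. \<phi> \<tau> y - \<psi> \<tau> y) t x"
  let ?F = "at t within {t<..T}"
  have Fnb: "?F \<noteq> bot" using t by (simp add: trivial_limit_within)
  obtain \<delta> where "\<delta> > 0" and D: "\<forall>\<tau>\<in>{0..T}. \<forall>y\<in>Cspace h T. cdist h T t x \<tau> y < \<delta> \<longrightarrow>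
      \<phi> t x - \<psi> t x \<le> \<phi> \<tau> y - \<psi> \<tau> y"
    using lm unfolding loc_min_C_def by blast
  obtain y where L: "((\<lambda>\<tau>. ((\<phi> \<tau> y - \<psi> \<tau> y) - (\<phi> t x - \<psi> t x)) / (\<tau> - t))
               \<longlongrightarrow> -(Dt t x + H t x (Dx t x))) ?F" and
     EV: "\<forall>\<delta>>0. eventually (\<lambda>\<tau>. \<tau> \<in> {0..T} \<and> \<tau> \<noteq> t \<and> (\<exists>z\<in>Cspace h T. cdist h T t x \<tau> z < \<delta> \<and>
                 \<phi> \<tau> z - \<psi> \<tau> z = \<phi> \<tau> y - \<psi> \<tau> y)) ?F"
    using core[OF assms(1,2,3,5,6) sm t x] by blast
  have ev: "eventually (\<lambda>\<tau>. \<tau> \<in> {t<..T}) ?F"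
    by (auto simp: eventually_at intro!: exI[of _ 1])
  have "eventually (\<lambda>\<tau>. 0 \<le> ((\<phi> \<tau> y - \<psi> \<tau> y) - (\<phi> t x - \<psi> t x)) / (\<tau> - t)) ?F"
    using eventually_conj[OF ev EV[rule_format, OF \<open>\<delta> > 0\<close>]]
  proof (rule eventually_mono)
    fix \<tau> assume a: "\<tau> \<in> {t<..T} \<and> \<tau> \<in> {0..T} \<and> \<tau> \<noteq> t \<and> (\<exists>z\<in>Cspace h T. cdist h T t x \<tau> z < \<delta> \<and>
                 \<phi> \<tau> z - \<psi> \<tau> z = \<phi> \<tau> y - \<psi> \<tau> y)"
    then have "0 \<le> (\<phi> \<tau> y - \<psi> \<tau> y) - (\<phi> t x - \<psi> t x)" using D by fastforce
    moreover have "0 < \<tau> - t" using a by auto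
    ultimately show "0 \<le> ((\<phi> \<tau> y - \<psi> \<tau> y) - (\<phi> t x - \<psi> t x)) / (\<tau> - t)" by simp
  qed
  then have "0 \<le> -(Dt t x + H t x (Dx t x))" using tendsto_lowerbound[OF L _ Fnb] by blast
  then show "Dt t x + H t x (Dx t x) \<le> 0" by simp
next
  fix \<psi> Dt Dx t x
  assume sm: "ci_smooth h T \<psi> Dt Dx" and t: "t \<in> {0..<T}" and x: "x \<in> Cspace h T"
    and lm: "loc_max_C h T (\<lambda>\<tau> y. \<phi> \<tau> y - \<psi> \<tau> y) t x"
  let ?F = "at t within {t<..T}"
  have Fnb: "?F \<noteq> bot" using t by (simp add: trivial_limit_within)
  obtain \<delta> where "\<delta> > 0" and D: "\<forall>\<tau>\<in>{0..T}. \<forall>y\<in>Cspace h T. cdist h T t x \<tau> y < \<delta> \<longrightarrow>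
      \<phi> \<tau> y - \<psi> \<tau> y \<le> \<phi> t x - \<psi> t x"
    using lm unfolding loc_max_C_def by blast
  obtain y where L: "((\<lambda>\<tau>. ((\<phi> \<tau> y - \<psi> \<tau> y) - (\<phi> t x - \<psi> t x)) / (\<tau> - t))
               \<longlongrightarrow> -(Dt t x + H t x (Dx t x))) ?F" and
     EV: "\<forall>\<delta>>0. eventually (\<lambda>\<tau>. \<tau> \<in> {0..T} \<and> \<tau> \<noteq> t \<and> (\<exists>z\<in>Cspace h T. cdist h T t x \<tau> z < \<delta> \<and>
                 \<phi> \<tau> z - \<psi> \<tau> z = \<phi> \<tau> y - \<psi> \<tau> y)) ?F"
    using core[OF assms(1,2,3,5,6) sm t x] by blast
  have ev: "eventually (\<lambda>\<tau>. \<tau> \<in> {t<..T}) ?F"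
    by (auto simp: eventually_at intro!: exI[of _ 1])
  have "eventually (\<lambda>\<tau>. ((\<phi> \<tau> y - \<psi> \<tau> y) - (\<phi> t x - \<psi> t x)) / (\<tau> - t) \<le> 0) ?F"
    using eventually_conj[OF ev EV[rule_format, OF \<open>\<delta> > 0\<close>]]
  proof (rule eventually_mono)
    fix \<tau> assume a: "\<tau> \<in> {t<..T} \<and> \<tau> \<in> {0..T} \<and> \<tau> \<noteq> t \<and> (\<exists>z\<in>Cspace h T. cdist h T t x \<tau> z < \<delta> \<and>
                 \<phi> \<tau> z - \<psi> \<tau> z = \<phi> \<tau> y - \<psi> \<tau> y)"
    then have "(\<phi> \<tau> y - \<psi> \<tau> y) - (\<phi> t x - \<psi> t x) \<le> 0" using D by fastforce
    moreover have "0 < \<tau> - t" using a by auto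
    ultimately show "((\<phi> \<tau> y - \<psi> \<tau> y) - (\<phi> t x - \<psi> t x)) / (\<tau> - t) \<le> 0"
      by (simp add: divide_nonpos_pos)
  qed
  then have "-(Dt t x + H t x (Dx t x)) \<le> 0" using tendsto_upperbound[OF L _ Fnb] by blast
  then show "Dt t x + H t x (Dx t x) \<ge> 0" by simp
qed


end
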